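(* Let $K\subset(-1,0)$ be compact. Then there exists an integer $N\ge 3$ such that for every $q\in K$ we have $\mathrm{S}(H_N;q)\neq 0$ and $\hat{y}_N(q)<-1$.
   Context: For a connected finite graph $G$, the all-terminal reliability polynomial is $\mathrm{Rel}(G;q)=\sum_{A}(1-q)^{|A|}q^{|E(G)|-|A|}$, summed over all $A\subseteq E(G)$ such that the spanning subgraph $(V(G),A)$ is connected. For a connected graph $H$ with two distinguished vertices $u,v$ (terminals), the split reliability polynomial is $\mathrm{S}(H;q)=\sum_{A}(1-q)^{|A|}q^{|E(H)|-|A|}$, summed over all $A\subseteq E(H)$ such that the spanning subgraph $(V(H),A)$ has exactly two connected components, one containing $u$ and the other containing $v$. The virtual edge interaction of $H$ is the rational function $\hat{y}_H(q)=\frac{\mathrm{Rel}(H;q)}{\mathrm{S}(H;q)}+1$. For $n\ge 3$, let $H_n=K_n\setminus e$ be the complete graph on $n$ vertices with one edge $e=uv$ removed, with terminals $u$ and $v$, and write $\hat{y}_n=\hat{y}_{H_n}$. *)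

theory Defs
  imports Complex_Main
begin

text \<open>Finite simple graphs: vertex set V, edge set E of 2-element subsets of V.
  A spanning subgraph is given by an edge subset A.\<close>

definition edge_rel :: "'a set set \<Rightarrow> ('a \<times> 'a) set" where
  "edge_rel A = {(x, y). {x, y} \<in> A}"

definition joined :: "'a set set \<Rightarrow> 'a \<Rightarrow> 'a \<Rightarrow> bool" where
  "joined A x y \<longleftrightarrow> (x, y) \<in> (edge_rel A)\<^sup>*"

definition spanning_connected :: "'a set \<Rightarrow> 'a set set \<Rightarrow> bool" where
  "spanning_connected V A \<longleftrightarrow> (\<forall>x\<in>V. \<forall>y\<in>V. joined A x y)"

text \<open>(V, A) has exactly two connected components, one containing u, the other v.\<close>
definition spanning_split :: "'a set \<Rightarrow> 'a set set \<Rightarrow> 'a \<Rightarrow> 'a \<Rightarrow> bool" where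
  "spanning_split V A u v \<longleftrightarrow> \<not> joined A u v \<and> (\<forall>x\<in>V. joined A u x \<or> joined A v x)"

definition Rel :: "'a set \<Rightarrow> 'a set set \<Rightarrow> real \<Rightarrow> real" where
  "Rel V E q = (\<Sum>A\<in>{A. A \<subseteq> E \<and> spanning_connected V A}.
      (1 - q) ^ card A * q ^ (card E - card A))"

definition SplitRel :: "'a set \<Rightarrow> 'a set set \<Rightarrow> 'a \<Rightarrow> 'a \<Rightarrow> real \<Rightarrow> real" where
  "SplitRel V E u v q = (\<Sum>A\<in>{A. A \<subseteq> E \<and> spanning_split V A u v}.
      (1 - q) ^ card A * q ^ (card E - card A))"

definition yhat :: "'a set \<Rightarrow> 'a set set \<Rightarrow> 'a \<Rightarrow> 'a \<Rightarrow> real \<Rightarrow> real" where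
  "yhat V E u v q = Rel V E q / SplitRel V E u v q + 1"

text \<open>H_n = K_n minus the edge {0,1}, on vertices {0..<n}, terminals u = 0, v = 1.\<close>
definition Hn_V :: "nat \<Rightarrow> nat set" where
  "Hn_V n = {0..<n}"

definition Hn_E :: "nat \<Rightarrow> nat set set" where
  "Hn_E n = {{i, j} | i j. i < j \<and> j < n \<and> \<not> (i = 0 \<and> j = 1)}"

definition S_H :: "nat \<Rightarrow> real \<Rightarrow> real" where
  "S_H n q = SplitRel (Hn_V n) (Hn_E n) 0 1 q"

definition yhat_H :: "nat \<Rightarrow> real \<Rightarrow> real" where
  "yhat_H n q = yhat (Hn_V n) (Hn_E n) 0 1 q"

end

theory Submission
  imports Defs
begin

definition KE :: "nat set \<Rightarrow> nat set set" where
  "KE W = {{i, j} | i j. i \<in> W \<and> j \<in> W \<and> i \<noteq> j}"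

definition cutE :: "nat set \<Rightarrow> nat set \<Rightarrow> nat set set" where
  "cutE C D = {{i, j} | i j. i \<in> C \<and> j \<in> D}"

definition closedE :: "nat set set \<Rightarrow> nat set \<Rightarrow> bool" where
  "closedE A C \<longleftrightarrow> (\<forall>x y. {x, y} \<in> A \<longrightarrow> (x \<in> C \<longleftrightarrow> y \<in> C))"

definition comp :: "nat set set \<Rightarrow> nat \<Rightarrow> nat set" where
  "comp A u = {x. joined A u x}"

lemma finite_KE: "finite W \<Longrightarrow> finite (KE W)"
proof -
  assume "finite W"
  have "KE W \<subseteq> (\<lambda>(i,j). {i,j}) ` (W \<times> W)" unfolding KE_def by auto
  then show ?thesis using \<open>finite W\<close> finite_subset by blast
qed

lemma card_KE_le: "finite W \<Longrightarrow> card (KE W) \<le> card W ^ 2"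
proof -
  assume f: "finite W"
  have "KE W \<subseteq> (\<lambda>(i,j). {i,j}) ` (W \<times> W)" unfolding KE_def by auto
  then have "card (KE W) \<le> card ((\<lambda>(i,j). {i,j}) ` (W \<times> W))"
    using f by (intro card_mono) auto
  also have "\<dots> \<le> card (W \<times> W)" using f by (intro card_image_le) auto
  finally show ?thesis by (simp add: card_cartesian_product power2_eq_square)
qed

lemma finite_cutE: "finite C \<Longrightarrow> finite D \<Longrightarrow> finite (cutE C D)"
proof -
  assume "finite C" "finite D"
  have "cutE C D = (\<lambda>(i,j). {i,j}) ` (C \<times> D)" unfolding cutE_def by auto
  then show ?thesis using \<open>finite C\<close> \<open>finite D\<close> by simp
qed

lemma card_cutE: "finite C \<Longrightarrow> finite D \<Longrightarrow> C \<inter> D = {} \<Longrightarrow> card (cutE C D) = card C * card D"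
proof -
  assume f: "finite C" "finite D" and d: "C \<inter> D = {}"
  have e: "cutE C D = (\<lambda>(i,j). {i,j}) ` (C \<times> D)" unfolding cutE_def by auto
  have "inj_on (\<lambda>(i,j). {i::nat,j}) (C \<times> D)"
    using d by (auto simp: inj_on_def doubleton_eq_iff)
  then show ?thesis unfolding e by (simp add: card_image card_cartesian_product)
qed

lemma KE_split: "C \<subseteq> W \<Longrightarrow> KE W = KE C \<union> KE (W - C) \<union> cutE C (W - C)"
proof
  assume CW: "C \<subseteq> W"
  show "KE W \<subseteq> KE C \<union> KE (W - C) \<union> cutE C (W - C)"
  proof
    fix e assume "e \<in> KE W"
    then obtain i j where e: "e = {i,j}" "i \<in> W" "j \<in> W" "i \<noteq> j" unfolding KE_def by blast
    consider "i \<in> C" "j \<in> C" | "i \<in> C" "j \<notin> C" | "i \<notin> C" "j \<in> C" | "i \<notin> C" "j \<notin> C" by blast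
    then show "e \<in> KE C \<union> KE (W - C) \<union> cutE C (W - C)"
    proof cases
      case 1 then show ?thesis using e unfolding KE_def by blast
    next
      case 2 then show ?thesis using e unfolding cutE_def by blast
    next
      case 3 then have "e = {j,i}" "j \<in> C" "i \<in> W - C" using e by auto
      then show ?thesis unfolding cutE_def by blast
    next
      case 4 then show ?thesis using e unfolding KE_def by blast
    qed
  qed
  show "KE C \<union> KE (W - C) \<union> cutE C (W - C) \<subseteq> KE W"
    using CW unfolding KE_def cutE_def by blast
qed

lemma KE_disj1: "KE C \<inter> KE (W - C) = {}"
  unfolding KE_def by (auto simp: doubleton_eq_iff)
lemma KE_disj2: "KE C \<inter> cutE C (W - C) = {}"
  unfolding KE_def cutE_def by (auto simp: doubleton_eq_iff)
lemma KE_disj3: "KE (W - C) \<inter> cutE C (W - C) = {}"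
  unfolding KE_def cutE_def by (auto simp: doubleton_eq_iff)

lemma KE_mem: "e \<in> KE W \<Longrightarrow> \<exists>i j. e = {i,j} \<and> i \<in> W \<and> j \<in> W \<and> i \<noteq> j"
  unfolding KE_def by auto

lemma KE_pair: "{x, y} \<in> KE W \<Longrightarrow> x \<in> W \<and> y \<in> W \<and> x \<noteq> y"
  unfolding KE_def by (auto simp: doubleton_eq_iff)

lemma edge_rel_iff[simp]: "(x, y) \<in> edge_rel A \<longleftrightarrow> {x, y} \<in> A"
  unfolding edge_rel_def by simp

lemma joined_refl[simp]: "joined A x x"
  unfolding joined_def by simp

lemma joined_mono: "A \<subseteq> B \<Longrightarrow> joined A x y \<Longrightarrow> joined B x y"
proof -
  assume "A \<subseteq> B" "joined A x y"
  then have "edge_rel A \<subseteq> edge_rel B" unfolding edge_rel_def by auto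
  then show ?thesis using \<open>joined A x y\<close> unfolding joined_def using rtrancl_mono by blast
qed

lemma joined_trans: "joined A x y \<Longrightarrow> joined A y z \<Longrightarrow> joined A x z"
  unfolding joined_def by simp

lemma joined_step: "joined A x y \<Longrightarrow> {y, z} \<in> A \<Longrightarrow> joined A x z"
  unfolding joined_def by (simp add: rtrancl.rtrancl_into_rtrancl)

lemma joined_sym: "joined A x y \<Longrightarrow> joined A y x"
proof -
  have "sym (edge_rel A)" unfolding sym_def edge_rel_def by (auto simp: insert_commute)
  then show "joined A x y \<Longrightarrow> joined A y x" unfolding joined_def
    by (metis rtrancl_converseI sym_conv_converse_eq)
qed

lemma joined_closed:
  assumes "closedE A C" "A \<subseteq> KE W" "joined A x y" "x \<in> C"
  shows "y \<in> C \<and> joined (A \<inter> KE C) x y"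
  using assms(3) unfolding joined_def
proof (induction rule: rtrancl_induct)
  case base
  then show ?case using assms by simp
next
  case (step y z)
  then have yz: "{y, z} \<in> A" by simp
  with step assms(1) have "z \<in> C" unfolding closedE_def by blast
  moreover have "{y, z} \<in> KE C" using yz assms(2) KE_pair[of y z W] step \<open>z \<in> C\<close>
    unfolding KE_def by blast
  moreover have "(y, z) \<in> edge_rel (A \<inter> KE C)" using yz \<open>{y, z} \<in> KE C\<close> by simp
  ultimately show ?case using step by (meson rtrancl.rtrancl_into_rtrancl)
qed


lemma closedE_KE: "A \<subseteq> KE W \<Longrightarrow> closedE A W"
  unfolding closedE_def
proof (intro allI impI)
  fix x y assume "A \<subseteq> KE W" "{x, y} \<in> A"
  then have "{x, y} \<in> KE W" by blast
  then show "(x \<in> W) = (y \<in> W)" using KE_pair[of x y W] by simp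
qed

lemma comp_closed: "closedE A (comp A u)"
  unfolding closedE_def comp_def
proof (intro allI impI)
  fix x y assume xy: "{x, y} \<in> A"
  then have yx: "{y, x} \<in> A" by (simp add: insert_commute)
  show "(x \<in> {x. joined A u x}) = (y \<in> {x. joined A u x})"
    using joined_step[OF _ xy] joined_step[OF _ yx] by auto
qed

lemma comp_u: "u \<in> comp A u" unfolding comp_def by simp

lemma comp_sub: "A \<subseteq> KE W \<Longrightarrow> u \<in> W \<Longrightarrow> comp A u \<subseteq> W"
proof
  fix x assume a: "A \<subseteq> KE W" "u \<in> W" and "x \<in> comp A u"
  then have "joined A u x" unfolding comp_def by simp
  from joined_closed[OF closedE_KE[OF a(1)] a(1) this a(2)] show "x \<in> W" by simp
qed

lemma comp_conn:
  assumes "A \<subseteq> KE W"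
  shows "spanning_connected (comp A u) (A \<inter> KE (comp A u))"
  unfolding spanning_connected_def
proof (intro ballI)
  fix x y assume "x \<in> comp A u" "y \<in> comp A u"
  then have "joined A u x" "joined A u y" unfolding comp_def by auto
  then have "joined A x y" by (metis joined_sym joined_trans)
  then show "joined (A \<inter> KE (comp A u)) x y"
    using joined_closed[OF comp_closed assms] \<open>x \<in> comp A u\<close> by blast
qed

lemma closed_cut_empty: "closedE A C \<Longrightarrow> C \<inter> D = {} \<Longrightarrow> A \<inter> cutE C D = {}"
  unfolding closedE_def cutE_def by blast

lemma cut_empty_closed:
  assumes "A \<subseteq> KE W" "A \<inter> cutE C (W - C) = {}"
  shows "closedE A C"
  unfolding closedE_def
proof (intro allI impI)
  fix x y assume xy: "{x, y} \<in> A"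
  then have "{x, y} \<in> KE W" using assms(1) by blast
  then have "x \<in> W" "y \<in> W" using KE_pair[of x y W] by simp_all
  have "{x, y} \<notin> cutE C (W - C)" "{y, x} \<notin> cutE C (W - C)"
    using assms(2) xy by (auto simp: insert_commute)
  then show "(x \<in> C) = (y \<in> C)" using \<open>x \<in> W\<close> \<open>y \<in> W\<close> unfolding cutE_def by blast
qed

lemma closed_compl: "A \<subseteq> KE W \<Longrightarrow> closedE A C \<Longrightarrow> closedE A (W - C)"
  unfolding closedE_def
proof (intro allI impI)
  fix x y assume a: "A \<subseteq> KE W" "\<forall>x y. {x, y} \<in> A \<longrightarrow> (x \<in> C) = (y \<in> C)" "{x, y} \<in> A"
  then have "{x, y} \<in> KE W" by blast
  then have "x \<in> W" "y \<in> W" using KE_pair[of x y W] by simp_all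
  then show "(x \<in> W - C) = (y \<in> W - C)" using a(2,3) by simp
qed

lemma comp_eq:
  assumes "A \<subseteq> KE W" "u \<in> C" "C \<subseteq> W" "A \<inter> cutE C (W - C) = {}"
    "spanning_connected C (A \<inter> KE C)"
  shows "comp A u = C"
proof
  show "comp A u \<subseteq> C" unfolding comp_def
    using joined_closed[OF cut_empty_closed[OF assms(1,4)] assms(1)] assms(2) by blast
  show "C \<subseteq> comp A u" unfolding comp_def
    using assms(2,5) joined_mono[of "A \<inter> KE C" A] unfolding spanning_connected_def by blast
qed

lemma comp_char:
  assumes "A \<subseteq> KE W" "u \<in> W"
  shows "comp A u = C \<longleftrightarrow> (u \<in> C \<and> C \<subseteq> W \<and> A \<inter> cutE C (W - C) = {} \<and>
    spanning_connected C (A \<inter> KE C))"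
proof
  assume h: "comp A u = C"
  have "A \<inter> cutE (comp A u) (W - comp A u) = {}"
    by (rule closed_cut_empty[OF comp_closed]) blast
  then show "u \<in> C \<and> C \<subseteq> W \<and> A \<inter> cutE C (W - C) = {} \<and> spanning_connected C (A \<inter> KE C)"
    unfolding h[symmetric] using comp_u comp_sub[OF assms] comp_conn[OF assms(1)]
    by simp
next
  assume "u \<in> C \<and> C \<subseteq> W \<and> A \<inter> cutE C (W - C) = {} \<and> spanning_connected C (A \<inter> KE C)"
  then show "comp A u = C" using comp_eq[OF assms(1)] by blast
qed

lemma split_char:
  assumes "A \<subseteq> KE V" "u \<in> V" "v \<in> V"
  shows "(spanning_split V A u v \<and> comp A u = C) \<longleftrightarrow>
    (u \<in> C \<and> C \<subseteq> V \<and> v \<notin> C \<and> A \<inter> cutE C (V - C) = {} \<and>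
    spanning_connected C (A \<inter> KE C) \<and> spanning_connected (V - C) (A \<inter> KE (V - C)))"
proof
  assume h: "spanning_split V A u v \<and> comp A u = C"
  then have hc: "comp A u = C" and hs: "spanning_split V A u v" by simp_all
  have c: "u \<in> C \<and> C \<subseteq> V \<and> A \<inter> cutE C (V - C) = {} \<and> spanning_connected C (A \<inter> KE C)"
    using iffD1[OF comp_char[OF assms(1,2)] hc] .
  have nuv: "\<not> joined A u v" using hs unfolding spanning_split_def by simp
  have vC: "v \<notin> C"
  proof
    assume "v \<in> C"
    then have "joined A u v" using hc unfolding comp_def by blast
    then show False using nuv by simp
  qed
  have cl0: "closedE A C" using comp_closed[of A u] hc by simp
  have cl: "closedE A (V - C)" using closed_compl[OF assms(1) cl0] .
  have vx: "joined A v x" if "x \<in> V - C" for x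
  proof -
    have "\<not> joined A u x" using that hc unfolding comp_def by blast
    moreover have "joined A u x \<or> joined A v x" using hs that unfolding spanning_split_def by blast
    ultimately show ?thesis by simp
  qed
  have "spanning_connected (V - C) (A \<inter> KE (V - C))"
    unfolding spanning_connected_def
  proof (intro ballI)
    fix x y assume xy: "x \<in> V - C" "y \<in> V - C"
    have "joined A x y" using joined_trans[OF joined_sym[OF vx[OF xy(1)]] vx[OF xy(2)]] .
    then show "joined (A \<inter> KE (V - C)) x y"
      using joined_closed[OF cl assms(1) _ xy(1)] by simp
  qed
  then show "u \<in> C \<and> C \<subseteq> V \<and> v \<notin> C \<and> A \<inter> cutE C (V - C) = {} \<and>
    spanning_connected C (A \<inter> KE C) \<and> spanning_connected (V - C) (A \<inter> KE (V - C))"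
    using c vC by simp
next
  assume h: "u \<in> C \<and> C \<subseteq> V \<and> v \<notin> C \<and> A \<inter> cutE C (V - C) = {} \<and>
    spanning_connected C (A \<inter> KE C) \<and> spanning_connected (V - C) (A \<inter> KE (V - C))"
  then have "u \<in> C \<and> C \<subseteq> V \<and> A \<inter> cutE C (V - C) = {} \<and> spanning_connected C (A \<inter> KE C)"
    by simp
  then have cc: "comp A u = C" using iffD2[OF comp_char[OF assms(1,2)]] by simp
  have "\<not> joined A u v"
  proof
    assume "joined A u v"
    then have "v \<in> comp A u" unfolding comp_def by simp
    then show False using cc h by simp
  qed
  moreover have "\<forall>x\<in>V. joined A u x \<or> joined A v x"
  proof
    fix x assume "x \<in> V"
    show "joined A u x \<or> joined A v x"
    proof (cases "x \<in> C")
      case True then show ?thesis using cc unfolding comp_def by blast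
    next
      case False
      then have "x \<in> V - C" "v \<in> V - C" using h \<open>x \<in> V\<close> assms(3) by simp_all
      then have "joined (A \<inter> KE (V - C)) v x" using h
        unfolding spanning_connected_def by simp
      then show ?thesis using joined_mono[of "A \<inter> KE (V - C)" A] by simp
    qed
  qed
  ultimately show "spanning_split V A u v \<and> comp A u = C"
    unfolding spanning_split_def using cc by simp
qed

lemma joined_insert_edge:
  assumes "joined (insert {u, v} A) u x"
  shows "joined A u x \<or> joined A v x"
  using assms unfolding joined_def
proof (induction rule: rtrancl_induct)
  case base then show ?case by simp
next
  case (step y z)
  then have e: "{y, z} = {u, v} \<or> {y, z} \<in> A" by (simp add: edge_rel_def)
  then show ?case
  proof
    assume "{y, z} = {u, v}"
    then have "z = u \<or> z = v" by (auto simp: doubleton_eq_iff)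
    then show ?thesis by auto
  next
    assume yz: "{y, z} \<in> A"
    then have yz': "(y, z) \<in> edge_rel A" by simp
    from step(3) show ?thesis
    proof
      assume "(u, y) \<in> (edge_rel A)\<^sup>*"
      then show ?thesis using rtrancl.rtrancl_into_rtrancl[OF _ yz'] by simp
    next
      assume "(v, y) \<in> (edge_rel A)\<^sup>*"
      then show ?thesis using rtrancl.rtrancl_into_rtrancl[OF _ yz'] by simp
    qed
  qed
qed

lemma conn_insert:
  assumes "u \<in> V" "v \<in> V"
  shows "spanning_connected V (insert {u, v} A) \<longleftrightarrow>
    spanning_connected V A \<or> spanning_split V A u v"
proof
  assume h: "spanning_connected V (insert {u, v} A)"
  have all: "joined A u x \<or> joined A v x" if "x \<in> V" for x
  proof -
    have "joined (insert {u, v} A) u x" using h assms(1) that unfolding spanning_connected_def by simp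
    then show ?thesis by (rule joined_insert_edge)
  qed
  show "spanning_connected V A \<or> spanning_split V A u v"
  proof (cases "joined A u v")
    case True
    have ux: "joined A u x" if "x \<in> V" for x
      using all[OF that] joined_trans[OF True] by auto
    have "spanning_connected V A" unfolding spanning_connected_def
    proof (intro ballI)
      fix x y assume "x \<in> V" "y \<in> V"
      show "joined A x y" using joined_trans[OF joined_sym[OF ux[OF \<open>x \<in> V\<close>]] ux[OF \<open>y \<in> V\<close>]] .
    qed
    then show ?thesis by simp
  next
    case False
    then show ?thesis using all unfolding spanning_split_def by simp
  qed
next
  assume h: "spanning_connected V A \<or> spanning_split V A u v"
  show "spanning_connected V (insert {u, v} A)"
  proof (cases "spanning_connected V A")
    case True
    show ?thesis unfolding spanning_connected_def
    proof (intro ballI)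
      fix x y assume "x \<in> V" "y \<in> V"
      then have "joined A x y" using True unfolding spanning_connected_def by simp
      then show "joined (insert {u, v} A) x y" by (metis joined_mono subset_insertI)
    qed
  next
    case False
    then have sp: "spanning_split V A u v" using h by simp
    let ?B = "insert {u, v} A"
    have uv: "joined ?B u v" using joined_step[of ?B u u v] by simp
    have all: "joined ?B u x" if "x \<in> V" for x
    proof -
      have "joined A u x \<or> joined A v x" using sp that unfolding spanning_split_def by simp
      then show "joined ?B u x"
      proof
        assume "joined A u x" then show ?thesis by (metis joined_mono subset_insertI)
      next
        assume "joined A v x" then have "joined ?B v x" by (metis joined_mono subset_insertI)
        then show ?thesis using joined_trans[OF uv] by simp
      qed
    qed
    show ?thesis unfolding spanning_connected_def
    proof (intro ballI)
      fix x y assume "x \<in> V" "y \<in> V"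
      show "joined ?B x y" using joined_trans[OF joined_sym[OF all[OF \<open>x \<in> V\<close>]] all[OF \<open>y \<in> V\<close>]] .
    qed
  qed
qed

definition wt :: "real \<Rightarrow> nat set set \<Rightarrow> nat set set \<Rightarrow> real" where
  "wt q E A = (1 - q) ^ card A * q ^ card (E - A)"

definition F :: "real \<Rightarrow> nat set set \<Rightarrow> (nat set set \<Rightarrow> bool) \<Rightarrow> real" where
  "F q E P = (\<Sum>A\<in>{A. A \<subseteq> E \<and> P A}. wt q E A)"

lemma fin_sub: "finite E \<Longrightarrow> finite {A. A \<subseteq> E \<and> P A}"
  by (rule finite_subset[of _ "Pow E"]) auto

lemma F_total: "finite E \<Longrightarrow> F q E (\<lambda>_. True) = 1"
proof -
  assume f: "finite E"
  have "(\<Prod>x\<in>E. (1 - q) + q) = (\<Sum>X\<in>Pow E. (\<Prod>x\<in>X. 1 - q) * (\<Prod>x\<in>E - X. q))"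
    by (rule prod_add[OF f])
  then have "1 = (\<Sum>X\<in>Pow E. (1 - q) ^ card X * q ^ card (E - X))" by simp
  moreover have "{A. A \<subseteq> E \<and> True} = Pow E" by auto
  ultimately show ?thesis unfolding F_def wt_def by simp
qed

lemma wt_union:
  assumes "finite E1" "finite E2" "E1 \<inter> E2 = {}" "A1 \<subseteq> E1" "A2 \<subseteq> E2"
  shows "wt q (E1 \<union> E2) (A1 \<union> A2) = wt q E1 A1 * wt q E2 A2"
proof -
  have fa: "finite A1" "finite A2" using assms finite_subset by blast+
  have c1: "card (A1 \<union> A2) = card A1 + card A2"
    using fa assms by (intro card_Un_disjoint) auto
  have "E1 \<union> E2 - (A1 \<union> A2) = (E1 - A1) \<union> (E2 - A2)" using assms by auto
  then have c2: "card (E1 \<union> E2 - (A1 \<union> A2)) = card (E1 - A1) + card (E2 - A2)"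
  proof -
    have "card ((E1 - A1) \<union> (E2 - A2)) = card (E1 - A1) + card (E2 - A2)"
      by (rule card_Un_disjoint) (use assms in auto)
    then show ?thesis using \<open>E1 \<union> E2 - (A1 \<union> A2) = (E1 - A1) \<union> (E2 - A2)\<close> by simp
  qed
  show ?thesis unfolding wt_def c1 c2 by (simp add: power_add algebra_simps)
qed

lemma factor2:
  assumes f: "finite E1" "finite E2" and d: "E1 \<inter> E2 = {}"
  shows "(\<Sum>A\<in>{A. A \<subseteq> E1 \<union> E2 \<and> P1 (A \<inter> E1) \<and> P2 (A \<inter> E2)}. wt q (E1 \<union> E2) A)
    = F q E1 P1 * F q E2 P2"
proof -
  let ?S1 = "{A. A \<subseteq> E1 \<and> P1 A}" and ?S2 = "{A. A \<subseteq> E2 \<and> P2 A}"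
  let ?h = "\<lambda>(A1, A2). A1 \<union> A2"
  have fin1: "finite ?S1" by (rule fin_sub[OF f(1)])
  have fin2: "finite ?S2" by (rule fin_sub[OF f(2)])
  have inj: "inj_on ?h (?S1 \<times> ?S2)"
  proof (rule inj_onI)
    fix x y assume "x \<in> ?S1 \<times> ?S2" "y \<in> ?S1 \<times> ?S2" "?h x = ?h y"
    then obtain a1 a2 b1 b2 where xy: "x = (a1, a2)" "y = (b1, b2)" "a1 \<subseteq> E1" "a2 \<subseteq> E2"
      "b1 \<subseteq> E1" "b2 \<subseteq> E2" "a1 \<union> a2 = b1 \<union> b2"
      by (cases x, cases y) auto
    have "a1 = (a1 \<union> a2) \<inter> E1" "b1 = (b1 \<union> b2) \<inter> E1" using xy(3-6) d by auto
    then have "a1 = b1" using xy(7) by simp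
    have "a2 = (a1 \<union> a2) \<inter> E2" "b2 = (b1 \<union> b2) \<inter> E2" using xy(3-6) d by auto
    then have "a2 = b2" using xy(7) by simp
    then show "x = y" using xy \<open>a1 = b1\<close> by simp
  qed
  have img: "{A. A \<subseteq> E1 \<union> E2 \<and> P1 (A \<inter> E1) \<and> P2 (A \<inter> E2)} = ?h ` (?S1 \<times> ?S2)"
  proof (rule set_eqI, rule iffI)
    fix A assume "A \<in> {A. A \<subseteq> E1 \<union> E2 \<and> P1 (A \<inter> E1) \<and> P2 (A \<inter> E2)}"
    then have "A = ?h (A \<inter> E1, A \<inter> E2)" "(A \<inter> E1, A \<inter> E2) \<in> ?S1 \<times> ?S2" by auto
    then show "A \<in> ?h ` (?S1 \<times> ?S2)" by blast
  next
    fix A assume "A \<in> ?h ` (?S1 \<times> ?S2)"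
    then obtain a1 a2 where a: "A = a1 \<union> a2" "a1 \<subseteq> E1" "a2 \<subseteq> E2" "P1 a1" "P2 a2" by auto
    then have "A \<inter> E1 = a1" "A \<inter> E2 = a2" using d by blast+
    then show "A \<in> {A. A \<subseteq> E1 \<union> E2 \<and> P1 (A \<inter> E1) \<and> P2 (A \<inter> E2)}" using a by auto
  qed
  have "(\<Sum>A\<in>{A. A \<subseteq> E1 \<union> E2 \<and> P1 (A \<inter> E1) \<and> P2 (A \<inter> E2)}. wt q (E1 \<union> E2) A)
     = (\<Sum>x\<in>?S1 \<times> ?S2. wt q (E1 \<union> E2) (?h x))"
    unfolding img by (simp only: sum.reindex[OF inj] o_def)
  also have "\<dots> = (\<Sum>x\<in>?S1 \<times> ?S2. wt q E1 (fst x) * wt q E2 (snd x))"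
  proof (rule sum.cong[OF refl])
    fix x assume "x \<in> ?S1 \<times> ?S2"
    then obtain a1 a2 where x: "x = (a1, a2)" "a1 \<subseteq> E1" "a2 \<subseteq> E2" by auto
    show "wt q (E1 \<union> E2) (?h x) = wt q E1 (fst x) * wt q E2 (snd x)"
      unfolding x(1) using wt_union[OF f d x(2,3)] by simp
  qed
  also have "\<dots> = F q E1 P1 * F q E2 P2"
    unfolding F_def sum_product sum.cartesian_product by (simp add: split_beta)
  finally show ?thesis .
qed

lemma factor3:
  assumes f: "finite E1" "finite E2" "finite E3"
    and d: "E1 \<inter> E2 = {}" "E1 \<inter> E3 = {}" "E2 \<inter> E3 = {}"
  shows "(\<Sum>A\<in>{A. A \<subseteq> E1 \<union> E2 \<union> E3 \<and> P1 (A \<inter> E1) \<and> P2 (A \<inter> E2) \<and> A \<inter> E3 = {}}.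
      wt q (E1 \<union> E2 \<union> E3) A) = F q E1 P1 * F q E2 P2 * q ^ card E3"
proof -
  let ?P = "\<lambda>B. P2 (B \<inter> E2) \<and> B \<inter> E3 = {}"
  have s: "{A. A \<subseteq> E1 \<union> (E2 \<union> E3) \<and> P1 (A \<inter> E1) \<and> P2 (A \<inter> E2) \<and> A \<inter> E3 = {}}
    = {A. A \<subseteq> E1 \<union> (E2 \<union> E3) \<and> P1 (A \<inter> E1) \<and> ?P (A \<inter> (E2 \<union> E3))}"
  proof -
    have "\<And>A. A \<inter> (E2 \<union> E3) \<inter> E2 = A \<inter> E2" "\<And>A. A \<inter> (E2 \<union> E3) \<inter> E3 = A \<inter> E3"
      using d by blast+
    then show ?thesis by (simp add: Un_assoc)
  qed
  have d2: "E1 \<inter> (E2 \<union> E3) = {}" using d by blast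
  have "F q (E2 \<union> E3) ?P = (\<Sum>A\<in>{A. A \<subseteq> E2 \<union> E3 \<and> P2 (A \<inter> E2) \<and> (\<lambda>B. B = {}) (A \<inter> E3)}. wt q (E2 \<union> E3) A)"
    unfolding F_def by simp
  also have "\<dots> = F q E2 P2 * F q E3 (\<lambda>B. B = {})" by (rule factor2[OF f(2,3) d(3)])
  also have "F q E3 (\<lambda>B. B = {}) = q ^ card E3"
  proof -
    have "{A. A \<subseteq> E3 \<and> A = {}} = {{}}" by auto
    then show ?thesis unfolding F_def wt_def by simp
  qed
  finally have e: "F q (E2 \<union> E3) ?P = F q E2 P2 * q ^ card E3" .
  have h: "(\<Sum>A\<in>{A. A \<subseteq> E1 \<union> (E2 \<union> E3) \<and> P1 (A \<inter> E1) \<and> ?P (A \<inter> (E2 \<union> E3))}.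
     wt q (E1 \<union> (E2 \<union> E3)) A) = F q E1 P1 * F q (E2 \<union> E3) ?P"
    by (rule factor2[OF f(1) finite_UnI[OF f(2,3)] d2])
  have u: "E1 \<union> E2 \<union> E3 = E1 \<union> (E2 \<union> E3)" by auto
  show ?thesis unfolding u s using h e by (simp add: mult.assoc)
qed

lemma F_insert:
  assumes f: "finite E" and e: "e \<notin> E"
  shows "F q (insert e E) P = q * F q E P + (1 - q) * F q E (\<lambda>A. P (insert e A))"
proof -
  let ?S1 = "{A. A \<subseteq> E \<and> P A}" and ?S2 = "{A. A \<subseteq> E \<and> P (insert e A)}"
  have fin1: "finite ?S1" by (rule fin_sub[OF f])
  have fin2: "finite ?S2" by (rule fin_sub[OF f])
  have fin3: "finite (insert e ` ?S2)" using fin2 by simp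
  have split: "{A. A \<subseteq> insert e E \<and> P A} = ?S1 \<union> insert e ` ?S2"
  proof (rule set_eqI, rule iffI)
    fix A assume A: "A \<in> {A. A \<subseteq> insert e E \<and> P A}"
    show "A \<in> ?S1 \<union> insert e ` ?S2"
    proof (cases "e \<in> A")
      case True
      then have ie: "insert e (A - {e}) = A" by blast
      have "A - {e} \<in> ?S2" using A ie by auto
      then have "insert e (A - {e}) \<in> insert e ` ?S2" by (rule imageI)
      then show ?thesis unfolding ie by blast
    next
      case False then have "A \<in> ?S1" using A by auto
      then show ?thesis by blast
    qed
  next
    fix A assume "A \<in> ?S1 \<union> insert e ` ?S2"
    then show "A \<in> {A. A \<subseteq> insert e E \<and> P A}" by blast
  qed
  have disj: "?S1 \<inter> insert e ` ?S2 = {}"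
  proof -
    have False if "A \<in> ?S1" "A \<in> insert e ` ?S2" for A
    proof -
      have "e \<in> A" using that(2) by auto
      then have "e \<in> E" using that(1) by auto
      then show False using e by simp
    qed
    then show ?thesis by blast
  qed
  have inj: "inj_on (insert e) ?S2"
  proof (rule inj_onI)
    fix x y assume "x \<in> ?S2" "y \<in> ?S2" "insert e x = insert e y"
    then have "e \<notin> x" "e \<notin> y" using e by auto
    then show "x = y" using \<open>insert e x = insert e y\<close> by (metis Diff_insert_absorb)
  qed
  have w1: "wt q (insert e E) A = q * wt q E A" if "A \<subseteq> E" for A
  proof -
    have "insert e E - A = insert e (E - A)" using that e by auto
    moreover have "finite (E - A)" using f by simp
    moreover have "e \<notin> E - A" using e by simp
    ultimately show ?thesis unfolding wt_def by simp
  qed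
  have w2: "wt q (insert e E) (insert e A) = (1 - q) * wt q E A" if "A \<subseteq> E" for A
  proof -
    have "insert e E - insert e A = E - A" using that e by auto
    moreover have "finite A" using f that finite_subset by blast
    moreover have "e \<notin> A" using e that by blast
    ultimately show ?thesis unfolding wt_def by simp
  qed
  have "F q (insert e E) P = (\<Sum>A\<in>?S1 \<union> insert e ` ?S2. wt q (insert e E) A)"
    unfolding F_def split by simp
  also have "\<dots> = (\<Sum>A\<in>?S1. wt q (insert e E) A) + (\<Sum>A\<in>insert e ` ?S2. wt q (insert e E) A)"
    by (rule sum.union_disjoint[OF fin1 fin3 disj])
  also have "(\<Sum>A\<in>insert e ` ?S2. wt q (insert e E) A) = (\<Sum>A\<in>?S2. wt q (insert e E) (insert e A))"
    by (simp only: sum.reindex[OF inj] o_def)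
  also have "\<dots> = (\<Sum>A\<in>?S2. (1 - q) * wt q E A)"
    by (rule sum.cong[OF refl]) (simp add: w2)
  also have "(\<Sum>A\<in>?S1. wt q (insert e E) A) = (\<Sum>A\<in>?S1. q * wt q E A)"
    by (rule sum.cong[OF refl]) (simp add: w1)
  finally show ?thesis unfolding F_def by (simp add: sum_distrib_left)
qed

lemma F_disj:
  assumes f: "finite E" and d: "\<And>A. A \<subseteq> E \<Longrightarrow> \<not> (P A \<and> Q A)"
  shows "F q E (\<lambda>A. P A \<or> Q A) = F q E P + F q E Q"
proof -
  have "{A. A \<subseteq> E \<and> (P A \<or> Q A)} = {A. A \<subseteq> E \<and> P A} \<union> {A. A \<subseteq> E \<and> Q A}" by auto
  moreover have "finite {A. A \<subseteq> E \<and> P A}" "finite {A. A \<subseteq> E \<and> Q A}"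
    by (rule fin_sub[OF f])+
  moreover have "{A. A \<subseteq> E \<and> P A} \<inter> {A. A \<subseteq> E \<and> Q A} = {}" using d by auto
  ultimately show ?thesis unfolding F_def by (simp add: sum.union_disjoint)
qed

lemma Rel_F: "finite E \<Longrightarrow> Rel V E q = F q E (spanning_connected V)"
  unfolding Rel_def F_def wt_def
  by (rule sum.cong) (auto simp: card_Diff_subset finite_subset)

lemma SplitRel_F: "finite E \<Longrightarrow> SplitRel V E u v q = F q E (\<lambda>A. spanning_split V A u v)"
  unfolding SplitRel_def F_def wt_def
  by (rule sum.cong) (auto simp: card_Diff_subset finite_subset)

definition R :: "real \<Rightarrow> nat set \<Rightarrow> real" where
  "R q W = F q (KE W) (spanning_connected W)"

lemma KE_single: "KE {u} = {}"
  unfolding KE_def by auto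

lemma R_single: "R q {u} = 1"
proof -
  have "{A. A \<subseteq> {} \<and> spanning_connected {u} A} = {{}}"
    unfolding spanning_connected_def by auto
  then show ?thesis unfolding R_def F_def KE_single wt_def by simp
qed

lemma R_rec:
  assumes fW: "finite W" and uW: "u \<in> W"
  shows "(\<Sum>C\<in>{C. u \<in> C \<and> C \<subseteq> W}. q ^ (card C * card (W - C)) * R q C) = 1"
proof -
  let ?S = "{A. A \<subseteq> KE W}" and ?T = "{C. u \<in> C \<and> C \<subseteq> W}"
  have finS: "finite ?S" using finite_KE[OF fW] by simp
  have finT: "finite ?T" by (rule finite_subset[of _ "Pow W"]) (use fW in auto)
  have img: "(\<lambda>A. comp A u) ` ?S \<subseteq> ?T"
    using comp_u comp_sub uW by blast
  have inner: "(\<Sum>A\<in>{A. A \<in> ?S \<and> comp A u = C}. wt q (KE W) A) = q ^ (card C * card (W - C)) * R q C"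
    if "C \<in> ?T" for C
  proof -
    have CW: "C \<subseteq> W" "u \<in> C" using that by auto
    have fC: "finite C" "finite (W - C)" using fW CW finite_subset by auto
    let ?E1 = "KE C" and ?E2 = "KE (W - C)" and ?E3 = "cutE C (W - C)"
    have KW: "KE W = ?E1 \<union> ?E2 \<union> ?E3" by (rule KE_split[OF CW(1)])
    have set: "{A. A \<in> ?S \<and> comp A u = C} =
      {A. A \<subseteq> ?E1 \<union> ?E2 \<union> ?E3 \<and> spanning_connected C (A \<inter> ?E1) \<and> (\<lambda>_. True) (A \<inter> ?E2) \<and> A \<inter> ?E3 = {}}"
    proof (rule set_eqI)
      fix A
      show "A \<in> {A. A \<in> ?S \<and> comp A u = C} \<longleftrightarrow>
        A \<in> {A. A \<subseteq> ?E1 \<union> ?E2 \<union> ?E3 \<and> spanning_connected C (A \<inter> ?E1) \<and> (\<lambda>_. True) (A \<inter> ?E2) \<and> A \<inter> ?E3 = {}}"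
      proof (cases "A \<subseteq> KE W")
        case True
        show ?thesis using comp_char[OF True uW, of C] CW True unfolding KW[symmetric] by auto
      next
        case False then show ?thesis unfolding KW[symmetric] by simp
      qed
    qed
    have "(\<Sum>A\<in>{A. A \<in> ?S \<and> comp A u = C}. wt q (KE W) A)
      = (\<Sum>A\<in>{A. A \<subseteq> ?E1 \<union> ?E2 \<union> ?E3 \<and> spanning_connected C (A \<inter> ?E1) \<and> (\<lambda>_. True) (A \<inter> ?E2) \<and> A \<inter> ?E3 = {}}. wt q (KE W) A)"
      by (rule sum.cong[OF set refl])
    also have "\<dots> = (\<Sum>A\<in>{A. A \<subseteq> ?E1 \<union> ?E2 \<union> ?E3 \<and> spanning_connected C (A \<inter> ?E1) \<and> (\<lambda>_. True) (A \<inter> ?E2) \<and> A \<inter> ?E3 = {}}. wt q (?E1 \<union> ?E2 \<union> ?E3) A)"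
      by (simp only: KW)
    also have "\<dots> = F q ?E1 (spanning_connected C) * F q ?E2 (\<lambda>_. True) * q ^ card ?E3"
      by (rule factor3) (use finite_KE fC finite_cutE KE_disj1 KE_disj2 KE_disj3 in auto)
    also have "\<dots> = q ^ (card C * card (W - C)) * R q C"
      using F_total[OF finite_KE[OF fC(2)]] card_cutE[OF fC] unfolding R_def by simp
    finally show ?thesis .
  qed
  have "1 = F q (KE W) (\<lambda>_. True)" using F_total[OF finite_KE[OF fW]] by simp
  also have "\<dots> = (\<Sum>A\<in>?S. wt q (KE W) A)" unfolding F_def by simp
  also have "\<dots> = (\<Sum>C\<in>?T. (\<Sum>A\<in>{A. A \<in> ?S \<and> comp A u = C}. wt q (KE W) A))"
    by (rule sum.group[OF finS finT img, symmetric])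
  also have "\<dots> = (\<Sum>C\<in>?T. q ^ (card C * card (W - C)) * R q C)"
    by (rule sum.cong[OF refl]) (rule inner)
  finally show ?thesis by simp
qed


lemma S_dec:
  assumes fV: "finite V" and uV: "u \<in> V" and vV: "v \<in> V" and uv: "u \<noteq> v"
  shows "F q (KE V - {{u, v}}) (\<lambda>A. spanning_split V A u v) =
    (\<Sum>C\<in>{C. u \<in> C \<and> C \<subseteq> V \<and> v \<notin> C}. q ^ (card C * card (V - C) - 1) * (R q C * R q (V - C)))"
proof -
  let ?H = "KE V - {{u, v}}"
  let ?S = "{A. A \<subseteq> ?H \<and> spanning_split V A u v}" and ?T = "{C. u \<in> C \<and> C \<subseteq> V \<and> v \<notin> C}"
  have HK: "?H \<subseteq> KE V" by blast
  have finS: "finite ?S" by (rule fin_sub) (use finite_KE[OF fV] in blast)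
  have finT: "finite ?T" by (rule finite_subset[of _ "Pow V"]) (use fV in auto)
  have img: "(\<lambda>A. comp A u) ` ?S \<subseteq> ?T"
  proof
    fix C assume "C \<in> (\<lambda>A. comp A u) ` ?S"
    then obtain A where A: "A \<subseteq> ?H" "spanning_split V A u v" "C = comp A u" by blast
    then have "A \<subseteq> KE V" by blast
    from iffD1[OF split_char[OF this uV vV, of C]] A show "C \<in> ?T" by simp
  qed
  have inner: "(\<Sum>A\<in>{A. A \<in> ?S \<and> comp A u = C}. wt q ?H A) =
      q ^ (card C * card (V - C) - 1) * (R q C * R q (V - C))"
    if "C \<in> ?T" for C
  proof -
    have CV: "C \<subseteq> V" "u \<in> C" "v \<notin> C" using that by auto
    have fC: "finite C" "finite (V - C)" using fV CV finite_subset by auto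
    let ?E1 = "KE C" and ?E2 = "KE (V - C)" and ?E3 = "cutE C (V - C) - {{u, v}}"
    have uvcut: "{u, v} \<in> cutE C (V - C)" using CV vV unfolding cutE_def by blast
    have uvE1: "{u, v} \<notin> ?E1" using CV KE_pair[of u v C] by blast
    have uvE2: "{u, v} \<notin> ?E2" using CV KE_pair[of u v "V - C"] by blast
    have KW: "?H = ?E1 \<union> ?E2 \<union> ?E3" using KE_split[OF CV(1)] uvE1 uvE2 by blast
    have set: "{A. A \<in> ?S \<and> comp A u = C} =
      {A. A \<subseteq> ?E1 \<union> ?E2 \<union> ?E3 \<and> spanning_connected C (A \<inter> ?E1) \<and>
         spanning_connected (V - C) (A \<inter> ?E2) \<and> A \<inter> ?E3 = {}}"
    proof (rule set_eqI)
      fix A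
      show "A \<in> {A. A \<in> ?S \<and> comp A u = C} \<longleftrightarrow>
        A \<in> {A. A \<subseteq> ?E1 \<union> ?E2 \<union> ?E3 \<and> spanning_connected C (A \<inter> ?E1) \<and>
         spanning_connected (V - C) (A \<inter> ?E2) \<and> A \<inter> ?E3 = {}}"
      proof (cases "A \<subseteq> ?H")
        case True
        then have AK: "A \<subseteq> KE V" by blast
        have e3: "A \<inter> cutE C (V - C) = {} \<longleftrightarrow> A \<inter> ?E3 = {}" using True by blast
        have l: "A \<in> {A. A \<in> ?S \<and> comp A u = C} \<longleftrightarrow> (spanning_split V A u v \<and> comp A u = C)"
          using True by simp
        have A3: "A \<subseteq> ?E1 \<union> ?E2 \<union> ?E3" using True KW by simp
        have r: "A \<in> {A. A \<subseteq> ?E1 \<union> ?E2 \<union> ?E3 \<and> spanning_connected C (A \<inter> ?E1) \<and>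
         spanning_connected (V - C) (A \<inter> ?E2) \<and> A \<inter> ?E3 = {}} \<longleftrightarrow>
          (spanning_connected C (A \<inter> ?E1) \<and> spanning_connected (V - C) (A \<inter> ?E2) \<and> A \<inter> ?E3 = {})"
          using A3 by simp
        show ?thesis unfolding l r split_char[OF AK uV vV, of C] e3 using CV by blast
      next
        case False
        then have "\<not> A \<subseteq> ?E1 \<union> ?E2 \<union> ?E3" using KW by simp
        then show ?thesis using False by simp
      qed
    qed
    have "(\<Sum>A\<in>{A. A \<in> ?S \<and> comp A u = C}. wt q ?H A)
      = (\<Sum>A\<in>{A. A \<subseteq> ?E1 \<union> ?E2 \<union> ?E3 \<and> spanning_connected C (A \<inter> ?E1) \<and>
         spanning_connected (V - C) (A \<inter> ?E2) \<and> A \<inter> ?E3 = {}}. wt q ?H A)"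
      by (rule sum.cong[OF set refl])
    also have "\<dots> = (\<Sum>A\<in>{A. A \<subseteq> ?E1 \<union> ?E2 \<union> ?E3 \<and> spanning_connected C (A \<inter> ?E1) \<and>
         spanning_connected (V - C) (A \<inter> ?E2) \<and> A \<inter> ?E3 = {}}. wt q (?E1 \<union> ?E2 \<union> ?E3) A)"
      by (simp only: KW)
    also have "\<dots> = F q ?E1 (spanning_connected C) * F q ?E2 (spanning_connected (V - C)) * q ^ card ?E3"
    proof -
      have d2: "?E1 \<inter> ?E3 = {}" using KE_disj2[of C V] by blast
      have d3: "?E2 \<inter> ?E3 = {}" using KE_disj3[of V C] by blast
      show ?thesis
        by (rule factor3[OF finite_KE[OF fC(1)] finite_KE[OF fC(2)] finite_Diff[OF finite_cutE[OF fC]] KE_disj1 d2 d3])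
    qed
    also have "card ?E3 = card C * card (V - C) - 1"
      using card_cutE[OF fC] uvcut by (simp add: card_Diff_singleton)
    finally show ?thesis unfolding R_def by simp
  qed
  have "F q ?H (\<lambda>A. spanning_split V A u v) = (\<Sum>A\<in>?S. wt q ?H A)" unfolding F_def by simp
  also have "\<dots> = (\<Sum>C\<in>?T. (\<Sum>A\<in>{A. A \<in> ?S \<and> comp A u = C}. wt q ?H A))"
    by (rule sum.group[OF finS finT img, symmetric])
  also have "\<dots> = (\<Sum>C\<in>?T. q ^ (card C * card (V - C) - 1) * (R q C * R q (V - C)))"
    by (rule sum.cong[OF refl]) (rule inner)
  finally show ?thesis .
qed

lemma R_H:
  assumes fV: "finite V" and uV: "u \<in> V" and vV: "v \<in> V" and uv: "u \<noteq> v"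
  shows "R q V = F q (KE V - {{u, v}}) (spanning_connected V)
     + (1 - q) * F q (KE V - {{u, v}}) (\<lambda>A. spanning_split V A u v)"
proof -
  let ?H = "KE V - {{u, v}}"
  have uvK: "{u, v} \<in> KE V" using uV vV uv unfolding KE_def by blast
  have fH: "finite ?H" using finite_KE[OF fV] by simp
  have "F q (insert {u, v} ?H) (spanning_connected V) = q * F q ?H (spanning_connected V) + (1 - q) * F q ?H (\<lambda>A. spanning_connected V (insert {u, v} A))"
    by (rule F_insert[OF fH]) simp
  then have "R q V = q * F q ?H (spanning_connected V) + (1 - q) * F q ?H (\<lambda>A. spanning_connected V (insert {u, v} A))"
    unfolding R_def insert_Diff[OF uvK] .
  also have "F q ?H (\<lambda>A. spanning_connected V (insert {u, v} A)) =
     F q ?H (\<lambda>A. spanning_connected V A \<or> spanning_split V A u v)"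
    using conn_insert[OF uV vV] by simp
  also have "\<dots> = F q ?H (spanning_connected V) + F q ?H (\<lambda>A. spanning_split V A u v)"
  proof (rule F_disj[OF fH])
    fix A assume "A \<subseteq> ?H"
    show "\<not> (spanning_connected V A \<and> spanning_split V A u v)"
      using uV vV unfolding spanning_connected_def spanning_split_def by blast
  qed
  finally show ?thesis by (simp add: algebra_simps)
qed

lemma term_bound:
  fixes s :: real
  assumes s0: "0 \<le> s" and s1: "s \<le> 1" and k: "1 \<le> k" "k < n"
    and ns: "real n * s ^ n \<le> 1"
  shows "real (n choose k) * (s ^ 2) ^ (k * (n - k)) \<le> real n * s ^ n"
proof -
  define m where "m = min k (n - k)"
  have m1: "1 \<le> m" "m \<le> n" using k unfolding m_def by auto
  have ch: "n choose k = n choose m"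
    unfolding m_def using k binomial_symmetric[of k n] by (auto simp: min_def)
  have c1: "real (n choose m) \<le> real n ^ m"
    using binomial_le_pow[OF m1(2)] by (metis of_nat_le_iff of_nat_power)
  have ex: "m * n \<le> 2 * (k * (n - k))"
  proof (cases "k \<le> n - k")
    case True
    then have "m = k" unfolding m_def by simp
    moreover have "n \<le> 2 * (n - k)" using True by simp
    ultimately show ?thesis by (metis mult.left_commute mult_le_mono2 mult.commute)
  next
    case False
    then have "m = n - k" unfolding m_def by simp
    moreover have "n \<le> 2 * k" using False by simp
    ultimately show ?thesis by (metis mult.left_commute mult_le_mono2 mult.commute)
  qed
  have c2: "(s ^ 2) ^ (k * (n - k)) \<le> s ^ (m * n)"
    unfolding power_mult[symmetric] by (rule power_decreasing[OF ex s0 s1])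
  have "real (n choose k) * (s ^ 2) ^ (k * (n - k)) \<le> real n ^ m * s ^ (m * n)"
    unfolding ch by (rule mult_mono[OF c1 c2]) (use s0 in simp_all)
  also have "\<dots> = (real n * s ^ n) ^ m"
    by (simp add: power_mult_distrib power_mult[symmetric] mult.commute)
  also have "\<dots> \<le> real n * s ^ n"
  proof -
    have x0: "0 \<le> real n * s ^ n" using s0 by simp
    obtain j where "m = Suc j" using m1 by (cases m) auto
    then have "(real n * s ^ n) ^ m = (real n * s ^ n) * (real n * s ^ n) ^ j" by simp
    also have "\<dots> \<le> (real n * s ^ n) * 1"
      by (rule mult_left_mono[OF power_le_one[OF x0 ns] x0])
    finally show ?thesis by simp
  qed
  finally show ?thesis .
qed

lemma sum_by_card:
  fixes f :: "nat \<Rightarrow> real"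
  assumes fW: "finite W"
  shows "(\<Sum>C\<in>{C. C \<subseteq> W \<and> C \<noteq> {} \<and> C \<noteq> W}. f (card C)) =
    (\<Sum>k\<in>{1..<card W}. real (card W choose k) * f k)"
proof -
  let ?P = "{C. C \<subseteq> W \<and> C \<noteq> {} \<and> C \<noteq> W}"
  have finP: "finite ?P" by (rule finite_subset[of _ "Pow W"]) (use fW in auto)
  have img: "card ` ?P \<subseteq> {1..<card W}"
  proof
    fix k assume "k \<in> card ` ?P"
    then obtain C where C: "C \<subseteq> W" "C \<noteq> {}" "C \<noteq> W" "k = card C" by blast
    have "finite C" using C fW finite_subset by blast
    then have "1 \<le> k" using C by (simp add: Suc_leI card_gt_0_iff)
    moreover have "k < card W" using C fW psubset_card_mono by blast
    ultimately show "k \<in> {1..<card W}" by simp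
  qed
  have inner: "(\<Sum>C\<in>{C. C \<in> ?P \<and> card C = k}. f (card C)) = real (card W choose k) * f k"
    if "k \<in> {1..<card W}" for k
  proof -
    have "{C. C \<in> ?P \<and> card C = k} = {C. C \<subseteq> W \<and> card C = k}"
    proof (rule set_eqI, rule iffI)
      fix C assume "C \<in> {C. C \<subseteq> W \<and> card C = k}"
      then show "C \<in> {C. C \<in> ?P \<and> card C = k}" using that by auto
    qed auto
    then have "(\<Sum>C\<in>{C. C \<in> ?P \<and> card C = k}. f (card C)) = (\<Sum>C\<in>{C. C \<subseteq> W \<and> card C = k}. f k)"
      by simp
    also have "\<dots> = real (card W choose k) * f k" using n_subsets[OF fW, of k] by simp
    finally show ?thesis .
  qed
  have "(\<Sum>C\<in>?P. f (card C)) = (\<Sum>k\<in>{1..<card W}. (\<Sum>C\<in>{C. C \<in> ?P \<and> card C = k}. f (card C)))"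
    by (rule sum.group[OF finP _ img, symmetric]) simp
  also have "\<dots> = (\<Sum>k\<in>{1..<card W}. real (card W choose k) * f k)"
    by (rule sum.cong[OF refl]) (rule inner)
  finally show ?thesis .
qed

lemma Gsum:
  fixes s :: real
  assumes fW: "finite W" and s0: "0 \<le> s" and s1: "s \<le> 1"
    and ns: "real (card W) * s ^ card W \<le> 1"
  shows "(\<Sum>C\<in>{C. C \<subseteq> W \<and> C \<noteq> {} \<and> C \<noteq> W}. (s ^ 2) ^ (card C * card (W - C)))
     \<le> real (card W) ^ 2 * s ^ card W"
proof -
  let ?n = "card W"
  have "(\<Sum>C\<in>{C. C \<subseteq> W \<and> C \<noteq> {} \<and> C \<noteq> W}. (s ^ 2) ^ (card C * card (W - C)))
    = (\<Sum>C\<in>{C. C \<subseteq> W \<and> C \<noteq> {} \<and> C \<noteq> W}. (\<lambda>k. (s ^ 2) ^ (k * (?n - k))) (card C))"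
  proof (rule sum.cong[OF refl])
    fix C assume "C \<in> {C. C \<subseteq> W \<and> C \<noteq> {} \<and> C \<noteq> W}"
    then have "C \<subseteq> W" by simp
    then have "card (W - C) = ?n - card C" using fW by (metis card_Diff_subset finite_subset)
    then show "(s ^ 2) ^ (card C * card (W - C)) = (\<lambda>k. (s ^ 2) ^ (k * (?n - k))) (card C)" by simp
  qed
  also have "\<dots> = (\<Sum>k\<in>{1..<?n}. real (?n choose k) * (s ^ 2) ^ (k * (?n - k)))"
    by (rule sum_by_card[OF fW])
  also have "\<dots> \<le> (\<Sum>k\<in>{1..<?n}. real ?n * s ^ ?n)"
    by (rule sum_mono) (rule term_bound[OF s0 s1 _ _ ns], auto)
  also have "\<dots> = real (?n - 1) * (real ?n * s ^ ?n)" by simp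
  also have "\<dots> \<le> real ?n * (real ?n * s ^ ?n)"
    by (rule mult_right_mono) (use s0 in simp_all)
  finally show ?thesis by (simp add: power2_eq_square mult.assoc)
qed

lemma R_crude:
  assumes fW: "finite W" and q1: "\<bar>q\<bar> \<le> 1"
  shows "\<bar>R q W\<bar> \<le> 4 ^ (card W ^ 2)"
proof -
  let ?E = "KE W"
  let ?S = "{A. A \<subseteq> ?E \<and> spanning_connected W A}"
  have fE: "finite ?E" by (rule finite_KE[OF fW])
  have finS: "finite ?S" by (rule fin_sub[OF fE])
  have w: "\<bar>wt q ?E A\<bar> \<le> 2 ^ card ?E" if "A \<in> ?S" for A
  proof -
    have AE: "A \<subseteq> ?E" using that by simp
    have cA: "card A \<le> card ?E" by (rule card_mono[OF fE AE])
    have "\<bar>wt q ?E A\<bar> = \<bar>1 - q\<bar> ^ card A * \<bar>q\<bar> ^ card (?E - A)"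
      unfolding wt_def by (simp add: abs_mult power_abs)
    also have "\<dots> \<le> 2 ^ card A * 1"
    proof (rule mult_mono)
      show "\<bar>1 - q\<bar> ^ card A \<le> 2 ^ card A" by (rule power_mono) (use q1 in auto)
      show "\<bar>q\<bar> ^ card (?E - A) \<le> 1" by (rule power_le_one) (use q1 in auto)
    qed simp_all
    also have "\<dots> \<le> 2 ^ card ?E" using cA by (simp add: power_increasing)
    finally show ?thesis .
  qed
  have "\<bar>R q W\<bar> = \<bar>\<Sum>A\<in>?S. wt q ?E A\<bar>" unfolding R_def F_def by simp
  also have "\<dots> \<le> (\<Sum>A\<in>?S. \<bar>wt q ?E A\<bar>)" by (rule sum_abs)
  also have "\<dots> \<le> (\<Sum>A\<in>?S. (2::real) ^ card ?E)" by (rule sum_mono) (rule w)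
  also have "\<dots> = real (card ?S) * 2 ^ card ?E" by simp
  also have "\<dots> \<le> 2 ^ card ?E * 2 ^ card ?E"
  proof (rule mult_right_mono)
    have "card ?S \<le> card (Pow ?E)" by (rule card_mono) (use fE in auto)
    also have "\<dots> = 2 ^ card ?E" using card_Pow fE by blast
    finally show "real (card ?S) \<le> 2 ^ card ?E" by (metis of_nat_le_iff of_nat_numeral of_nat_power)
  qed simp
  also have "\<dots> = 4 ^ card ?E" by (simp add: power_mult_distrib[symmetric])
  also have "\<dots> \<le> 4 ^ (card W ^ 2)" by (rule power_increasing) (use card_KE_le[OF fW] in auto)
  finally show ?thesis .
qed

lemma Rdev:
  fixes s q M :: real
  assumes fW: "finite W" and uW: "u \<in> W" and s0: "0 \<le> s" and s1: "s \<le> 1"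
    and q: "\<bar>q\<bar> \<le> s ^ 2" and ns: "real (card W) * s ^ card W \<le> 1" and M0: "0 \<le> M"
    and IH: "\<And>C. C \<subset> W \<Longrightarrow> \<bar>R q C\<bar> \<le> M"
  shows "\<bar>R q W - 1\<bar> \<le> M * (real (card W) ^ 2 * s ^ card W)"
proof -
  let ?T = "{C. u \<in> C \<and> C \<subseteq> W}"
  let ?P = "{C. C \<subseteq> W \<and> C \<noteq> {} \<and> C \<noteq> W}"
  let ?f = "\<lambda>C. q ^ (card C * card (W - C)) * R q C"
  have finT: "finite ?T" by (rule finite_subset[of _ "Pow W"]) (use fW in auto)
  have finP: "finite ?P" by (rule finite_subset[of _ "Pow W"]) (use fW in auto)
  have WT: "W \<in> ?T" using uW by simp
  have "1 = (\<Sum>C\<in>?T. ?f C)" using R_rec[OF fW uW, of q] by simp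
  also have "\<dots> = ?f W + (\<Sum>C\<in>?T - {W}. ?f C)" by (rule sum.remove[OF finT WT])
  also have "?f W = R q W" by simp
  finally have eq: "R q W - 1 = - (\<Sum>C\<in>?T - {W}. ?f C)" by simp
  have TP: "?T - {W} \<subseteq> ?P" by blast
  have bnd: "\<bar>?f C\<bar> \<le> M * (s ^ 2) ^ (card C * card (W - C))" if "C \<in> ?T - {W}" for C
  proof -
    have "C \<subset> W" using that by blast
    then have RC: "\<bar>R q C\<bar> \<le> M" by (rule IH)
    have "\<bar>?f C\<bar> = \<bar>q\<bar> ^ (card C * card (W - C)) * \<bar>R q C\<bar>" by (simp add: abs_mult power_abs)
    also have "\<dots> \<le> (s ^ 2) ^ (card C * card (W - C)) * M"
      by (rule mult_mono[OF power_mono[OF q] RC]) (simp_all)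
    finally show ?thesis by (simp add: mult.commute)
  qed
  have "\<bar>R q W - 1\<bar> = \<bar>\<Sum>C\<in>?T - {W}. ?f C\<bar>" unfolding eq by simp
  also have "\<dots> \<le> (\<Sum>C\<in>?T - {W}. \<bar>?f C\<bar>)" by (rule sum_abs)
  also have "\<dots> \<le> (\<Sum>C\<in>?T - {W}. M * (s ^ 2) ^ (card C * card (W - C)))"
    by (rule sum_mono) (rule bnd)
  also have "\<dots> = M * (\<Sum>C\<in>?T - {W}. (s ^ 2) ^ (card C * card (W - C)))"
    by (simp add: sum_distrib_left)
  also have "\<dots> \<le> M * (\<Sum>C\<in>?P. (s ^ 2) ^ (card C * card (W - C)))"
    by (rule mult_left_mono[OF sum_mono2[OF finP TP] M0]) simp
  also have "\<dots> \<le> M * (real (card W) ^ 2 * s ^ card W)"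
    by (rule mult_left_mono[OF Gsum[OF fW s0 s1 ns] M0])
  finally show ?thesis .
qed


lemma ns_le:
  fixes s :: real
  assumes "0 \<le> s" "1 \<le> n"
  shows "real n * s ^ n \<le> real n ^ 2 * s ^ n"
proof (rule mult_right_mono)
  have "real n * 1 \<le> real n * real n" using assms(2) by (intro mult_left_mono) auto
  then show "real n \<le> real n ^ 2" by (simp add: power2_eq_square)
qed (use assms in simp)

lemma R_uniform:
  fixes s q :: real
  assumes s0: "0 \<le> s" and s1: "s \<le> 1" and n0: "1 \<le> n0"
    and G: "\<And>n. n0 \<le> n \<Longrightarrow> real n ^ 2 * s ^ n \<le> 1 / 2"
    and q: "\<bar>q\<bar> \<le> s ^ 2"
  shows "finite W \<Longrightarrow> \<bar>R q W\<bar> \<le> max 2 (4 ^ (n0 ^ 2))"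
proof (induction "card W" arbitrary: W rule: less_induct)
  case less
  let ?M = "max 2 (4 ^ (n0 ^ 2)) :: real"
  have q1: "\<bar>q\<bar> \<le> 1" using q power_le_one[OF s0 s1, of 2] by linarith
  show ?case
  proof (cases "card W < n0")
    case True
    have "\<bar>R q W\<bar> \<le> 4 ^ (card W ^ 2)" by (rule R_crude[OF less.prems q1])
    also have "\<dots> \<le> 4 ^ (n0 ^ 2)"
      by (rule power_increasing) (use True in \<open>simp_all add: power_mono\<close>)
    also have "\<dots> \<le> ?M" by simp
    finally show ?thesis .
  next
    case False
    then have cW: "n0 \<le> card W" by simp
    then have "W \<noteq> {}" using n0 by auto
    then obtain u where uW: "u \<in> W" by blast
    have Gw: "real (card W) ^ 2 * s ^ card W \<le> 1 / 2" by (rule G[OF cW])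
    have ns: "real (card W) * s ^ card W \<le> 1"
      using ns_le[OF s0, of "card W"] cW n0 Gw by linarith
    have IH: "\<bar>R q C\<bar> \<le> ?M" if "C \<subset> W" for C
    proof -
      have "finite C" using that less.prems finite_subset by blast
      moreover have "card C < card W" using that less.prems psubset_card_mono by blast
      ultimately show ?thesis using less.hyps by blast
    qed
    have M0: "0 \<le> ?M" by simp
    have "\<bar>R q W - 1\<bar> \<le> ?M * (real (card W) ^ 2 * s ^ card W)"
      by (rule Rdev[OF less.prems uW s0 s1 q ns M0 IH])
    also have "\<dots> \<le> ?M * (1 / 2)" by (rule mult_left_mono[OF Gw M0])
    finally have "\<bar>R q W - 1\<bar> \<le> ?M / 2" by simp
    moreover have "2 \<le> ?M" by simp
    ultimately show ?thesis by linarith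
  qed
qed

lemma exp_split:
  fixes a b n :: nat
  assumes "1 \<le> a" "1 \<le> b" "a + b = n"
  shows "a * b - 1 = (n - 2) + (a - 1) * (b - 1)"
proof -
  obtain a' where "a = Suc a'" using assms(1) by (cases a) auto
  moreover obtain b' where "b = Suc b'" using assms(2) by (cases b) auto
  ultimately show ?thesis using assms(3) by (simp add: algebra_simps)
qed

lemma S_form:
  assumes fV: "finite V" and uV: "u \<in> V" and vV: "v \<in> V" and uv: "u \<noteq> v" and n3: "3 \<le> card V"
  shows "F q (KE V - {{u, v}}) (\<lambda>A. spanning_split V A u v) =
    q ^ (card V - 2) * (R q (V - {u}) + R q (V - {v}) +
      (\<Sum>C\<in>{C. u \<in> C \<and> C \<subseteq> V \<and> v \<notin> C} - {{u}} - {V - {v}}.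
         q ^ ((card C - 1) * (card (V - C) - 1)) * (R q C * R q (V - C))))"
proof -
  let ?T = "{C. u \<in> C \<and> C \<subseteq> V \<and> v \<notin> C}"
  let ?g = "\<lambda>C. q ^ (card C * card (V - C) - 1) * (R q C * R q (V - C))"
  let ?n = "card V"
  have finT: "finite ?T" by (rule finite_subset[of _ "Pow V"]) (use fV in auto)
  have uT: "{u} \<in> ?T" using uV uv by simp
  have vT: "V - {v} \<in> ?T - {{u}}"
  proof -
    have "V - {v} \<noteq> {u}"
    proof
      assume "V - {v} = {u}"
      then have "V = {u, v}" using vV by blast
      then have "card V \<le> 2" by (simp add: card_insert_le_m1)
      then show False using n3 by simp
    qed
    then show ?thesis using uV uv by auto
  qed
  have cu: "card (V - {u}) = ?n - 1" using fV uV by simp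
  have cv: "card (V - {v}) = ?n - 1" using fV vV by simp
  have g1: "?g {u} = q ^ (?n - 2) * R q (V - {u})"
  proof -
    have "card {u} * card (V - {u}) - 1 = ?n - 2" using cu by simp
    then show ?thesis by (simp add: R_single)
  qed
  have g2: "?g (V - {v}) = q ^ (?n - 2) * R q (V - {v})"
  proof -
    have vv: "V - (V - {v}) = {v}" using vV by blast
    have "card (V - {v}) * card (V - (V - {v})) - 1 = ?n - 2" using cv vv by simp
    then show ?thesis using vv by (simp add: R_single)
  qed
  have g3: "?g C = q ^ (?n - 2) * (q ^ ((card C - 1) * (card (V - C) - 1)) * (R q C * R q (V - C)))"
    if "C \<in> ?T - {{u}} - {V - {v}}" for C
  proof -
    have C: "u \<in> C" "C \<subseteq> V" "v \<notin> C" using that by auto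
    have fC: "finite C" using C fV finite_subset by blast
    have a1: "1 \<le> card C" using C fC by (metis card_0_eq empty_iff less_one not_le)
    have "v \<in> V - C" using C vV by simp
    then have b1: "1 \<le> card (V - C)" using fV by (metis card_0_eq empty_iff finite_Diff less_one not_le)
    have ab: "card C + card (V - C) = ?n" using C fV fC by (metis card_Diff_subset le_add_diff_inverse card_mono)
    have "card C * card (V - C) - 1 = (?n - 2) + (card C - 1) * (card (V - C) - 1)"
      by (rule exp_split[OF a1 b1 ab])
    then show ?thesis by (simp add: power_add mult.assoc)
  qed
  have "F q (KE V - {{u, v}}) (\<lambda>A. spanning_split V A u v) = (\<Sum>C\<in>?T. ?g C)"
    by (rule S_dec[OF fV uV vV uv])
  also have "\<dots> = ?g {u} + (\<Sum>C\<in>?T - {{u}}. ?g C)" by (rule sum.remove[OF finT uT])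
  also have "(\<Sum>C\<in>?T - {{u}}. ?g C) = ?g (V - {v}) + (\<Sum>C\<in>?T - {{u}} - {V - {v}}. ?g C)"
    by (rule sum.remove) (use finT vT in simp_all)
  also have "(\<Sum>C\<in>?T - {{u}} - {V - {v}}. ?g C) = (\<Sum>C\<in>?T - {{u}} - {V - {v}}.
      q ^ (?n - 2) * (q ^ ((card C - 1) * (card (V - C) - 1)) * (R q C * R q (V - C))))"
    by (rule sum.cong[OF refl]) (rule g3)
  finally show ?thesis unfolding g1 g2 by (simp add: sum_distrib_left algebra_simps)
qed


lemma T3_bound:
  fixes s q M :: real
  assumes fV: "finite V" and uV: "u \<in> V" and vV: "v \<in> V" and uv: "u \<noteq> v"
    and s0: "0 \<le> s" and s1: "s \<le> 1" and q: "\<bar>q\<bar> \<le> s ^ 2" and M0: "0 \<le> M"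
    and RM: "\<And>C. finite C \<Longrightarrow> \<bar>R q C\<bar> \<le> M"
    and ns: "real (card V - 2) * s ^ (card V - 2) \<le> 1"
  shows "\<bar>\<Sum>C\<in>{C. u \<in> C \<and> C \<subseteq> V \<and> v \<notin> C} - {{u}} - {V - {v}}.
         q ^ ((card C - 1) * (card (V - C) - 1)) * (R q C * R q (V - C))\<bar>
      \<le> M ^ 2 * (real (card V - 2) ^ 2 * s ^ (card V - 2))"
proof -
  let ?T3 = "{C. u \<in> C \<and> C \<subseteq> V \<and> v \<notin> C} - {{u}} - {V - {v}}"
  let ?V' = "V - {u, v}"
  let ?P = "{D. D \<subseteq> ?V' \<and> D \<noteq> {} \<and> D \<noteq> ?V'}"
  let ?h = "\<lambda>C. (s ^ 2) ^ ((card C - 1) * (card (V - C) - 1))"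
  have fV': "finite ?V'" using fV by simp
  have cV': "card ?V' = card V - 2"
  proof -
    have "{u, v} \<subseteq> V" using uV vV by simp
    moreover have "card {u, v} = 2" using uv by simp
    ultimately show ?thesis using fV by (simp add: card_Diff_subset)
  qed
  have finT3: "finite ?T3" by (rule finite_subset[of _ "Pow V"]) (use fV in auto)
  have img: "?T3 = insert u ` ?P"
  proof (rule set_eqI, rule iffI)
    fix C assume C: "C \<in> ?T3"
    then have C1: "u \<in> C" "C \<subseteq> V" "v \<notin> C" "C \<noteq> {u}" "C \<noteq> V - {v}" by auto
    have ic: "insert u (C - {u}) = C" using C1 by blast
    have "C - {u} \<subseteq> ?V'" using C1 by blast
    moreover have "C - {u} \<noteq> {}" using C1 by blast
    moreover have "C - {u} \<noteq> ?V'"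
    proof
      assume "C - {u} = ?V'"
      then have "insert u (C - {u}) = V - {v}" using uV uv by blast
      then show False using ic C1 by simp
    qed
    ultimately have "C - {u} \<in> ?P" by simp
    then have "insert u (C - {u}) \<in> insert u ` ?P" by (rule imageI)
    then show "C \<in> insert u ` ?P" unfolding ic .
  next
    fix C assume "C \<in> insert u ` ?P"
    then obtain D where D: "C = insert u D" "D \<subseteq> ?V'" "D \<noteq> {}" "D \<noteq> ?V'" by blast
    have "u \<in> C" "C \<subseteq> V" "v \<notin> C" using D uV uv by auto
    moreover have "C \<noteq> {u}" using D by blast
    moreover have "C \<noteq> V - {v}"
    proof
      assume "C = V - {v}"
      then have "D = ?V'" using D by blast
      then show False using D by simp
    qed
    ultimately show "C \<in> ?T3" by simp
  qed
  have inj: "inj_on (insert u) ?P"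
  proof (rule inj_onI)
    fix x y assume "x \<in> ?P" "y \<in> ?P" "insert u x = insert u y"
    then have "u \<notin> x" "u \<notin> y" by auto
    then show "x = y" using \<open>insert u x = insert u y\<close> by (metis Diff_insert_absorb)
  qed
  have hD: "?h (insert u D) = (s ^ 2) ^ (card D * card (?V' - D))" if "D \<in> ?P" for D
  proof -
    have D: "D \<subseteq> ?V'" using that by simp
    have fD: "finite D" using D fV' finite_subset by blast
    have uD: "u \<notin> D" using D by blast
    have c1: "card (insert u D) - 1 = card D" using fD uD by simp
    have e: "V - insert u D = insert v (?V' - D)" using D vV uv by blast
    have c2: "card (V - insert u D) - 1 = card (?V' - D)" unfolding e using fV by simp
    show ?thesis unfolding c1 c2 ..
  qed
  have bnd: "\<bar>q ^ ((card C - 1) * (card (V - C) - 1)) * (R q C * R q (V - C))\<bar> \<le> M ^ 2 * ?h C"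
    if "C \<in> ?T3" for C
  proof -
    have fC: "finite C" "finite (V - C)" using that fV finite_subset by auto
    have RR: "\<bar>R q C * R q (V - C)\<bar> \<le> M * M"
      unfolding abs_mult by (rule mult_mono[OF RM[OF fC(1)] RM[OF fC(2)] M0]) simp
    have "\<bar>q ^ ((card C - 1) * (card (V - C) - 1)) * (R q C * R q (V - C))\<bar>
      = \<bar>q\<bar> ^ ((card C - 1) * (card (V - C) - 1)) * \<bar>R q C * R q (V - C)\<bar>"
      by (simp add: abs_mult power_abs)
    also have "\<dots> \<le> ?h C * (M * M)"
      by (rule mult_mono[OF power_mono[OF q] RR]) simp_all
    finally show ?thesis by (simp add: power2_eq_square mult.commute)
  qed
  have "\<bar>\<Sum>C\<in>?T3. q ^ ((card C - 1) * (card (V - C) - 1)) * (R q C * R q (V - C))\<bar>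
     \<le> (\<Sum>C\<in>?T3. \<bar>q ^ ((card C - 1) * (card (V - C) - 1)) * (R q C * R q (V - C))\<bar>)"
    by (rule sum_abs)
  also have "\<dots> \<le> (\<Sum>C\<in>?T3. M ^ 2 * ?h C)" by (rule sum_mono) (rule bnd)
  also have "\<dots> = M ^ 2 * (\<Sum>C\<in>?T3. ?h C)" by (simp add: sum_distrib_left)
  also have "(\<Sum>C\<in>?T3. ?h C) = (\<Sum>D\<in>?P. ?h (insert u D))"
    unfolding img by (simp only: sum.reindex[OF inj] o_def)
  also have "\<dots> = (\<Sum>D\<in>?P. (s ^ 2) ^ (card D * card (?V' - D)))"
    by (rule sum.cong[OF refl]) (rule hD)
  also have "\<dots> \<le> real (card ?V') ^ 2 * s ^ card ?V'"
    by (rule Gsum[OF fV' s0 s1]) (use ns cV' in simp)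
  finally show ?thesis unfolding cV' by (simp add: mult_left_mono)
qed

lemma KE_memI: "i \<in> W \<Longrightarrow> j \<in> W \<Longrightarrow> i \<noteq> j \<Longrightarrow> {i, j} \<in> KE W"
  unfolding KE_def by (rule CollectI, rule exI[of _ i], rule exI[of _ j]) simp

lemma Hn_memI: "i < j \<Longrightarrow> j < n \<Longrightarrow> \<not> (i = 0 \<and> j = 1) \<Longrightarrow> {i, j} \<in> Hn_E n"
  unfolding Hn_E_def by (rule CollectI, rule exI[of _ i], rule exI[of _ j]) simp

lemma Hn_E_eq: "Hn_E n = KE {0..<n} - {{0, 1}}"
proof (rule set_eqI, rule iffI)
  fix e assume "e \<in> Hn_E n"
  then obtain i j where e: "e = {i, j}" "i < j" "j < n" "\<not> (i = 0 \<and> j = 1)"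
    unfolding Hn_E_def by blast
  have "e \<in> KE {0..<n}" unfolding e(1) by (rule KE_memI) (use e in simp_all)
  moreover have "e \<noteq> {0, 1}"
  proof
    assume "e = {0, 1}"
    then have "{i, j} = {0, 1}" using e by simp
    then have "(i = 0 \<and> j = 1) \<or> (i = 1 \<and> j = 0)" by (simp add: doubleton_eq_iff)
    then show False using e by auto
  qed
  ultimately show "e \<in> KE {0..<n} - {{0, 1}}" by simp
next
  fix e assume a: "e \<in> KE {0..<n} - {{0, 1}}"
  then have "e \<in> KE {0..<n}" by simp
  then obtain i j where e: "e = {i, j}" "i \<in> {0..<n}" "j \<in> {0..<n}" "i \<noteq> j" using KE_mem by blast
  have ne: "{i, j} \<noteq> {0, 1}" using a e by simp
  show "e \<in> Hn_E n"
  proof (cases "i < j")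
    case True
    have "\<not> (i = 0 \<and> j = 1)" using ne by auto
    then show ?thesis unfolding e(1) using Hn_memI[OF True, of n] e by simp
  next
    case False
    then have lt: "j < i" using e by simp
    have e2: "e = {j, i}" using e by (simp add: insert_commute)
    have "\<not> (j = 0 \<and> i = 1)" using ne by (auto simp: insert_commute)
    then show ?thesis unfolding e2 using Hn_memI[OF lt, of n] e by simp
  qed
qed

lemma main_q:
  fixes s q M :: real and N :: nat
  assumes oddN: "odd N" and N5: "5 \<le> N" and q0: "q < 0" and q1: "-1 < q" and q: "\<bar>q\<bar> \<le> s ^ 2"
    and s0: "0 \<le> s" and s1: "s \<le> 1" and M2: "2 \<le> M"
    and RM: "\<And>C. finite C \<Longrightarrow> \<bar>R q C\<bar> \<le> M"
    and c1: "M * (real N ^ 2 * s ^ N) \<le> 1 / 2"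
    and c2: "M * (real (N - 1) ^ 2 * s ^ (N - 1)) \<le> 1 / 4"
    and c3: "M ^ 2 * (real (N - 2) ^ 2 * s ^ (N - 2)) \<le> 1 / 2"
    and c4: "(2 * M + 1) * (s ^ 2) ^ (N - 2) \<le> 1 / 4"
    and n1: "real N * s ^ N \<le> 1"
    and n2: "real (N - 1) * s ^ (N - 1) \<le> 1"
    and n3: "real (N - 2) * s ^ (N - 2) \<le> 1"
  shows "S_H N q \<noteq> 0 \<and> yhat_H N q < -1"
proof -
  let ?V = "{0..<N}"
  let ?H = "KE ?V - {{0, 1}}"
  have fV: "finite ?V" by simp
  have cV: "card ?V = N" by simp
  have uV: "(0::nat) \<in> ?V" and vV: "(1::nat) \<in> ?V" using N5 by auto
  have uv: "(0::nat) \<noteq> 1" by simp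
  have fH: "finite ?H" using finite_KE[OF fV] by simp
  have M0: "0 \<le> M" using M2 by simp
  define S where "S = F q ?H (\<lambda>A. spanning_split ?V A 0 1)"
  define RH where "RH = F q ?H (spanning_connected ?V)"
  have SH: "S_H N q = S" unfolding S_H_def S_def Hn_V_def Hn_E_eq by (rule SplitRel_F[OF fH])
  have YH: "yhat_H N q = RH / S + 1"
    unfolding yhat_H_def yhat_def Hn_V_def Hn_E_eq RH_def S_def
    using Rel_F[OF fH] SplitRel_F[OF fH] by simp
  have RV: "R q ?V = RH + (1 - q) * S" unfolding RH_def S_def by (rule R_H[OF fV uV vV uv])
  define X where "X = R q (?V - {0}) + R q (?V - {1}) +
      (\<Sum>C\<in>{C. 0 \<in> C \<and> C \<subseteq> ?V \<and> 1 \<notin> C} - {{0}} - {?V - {1}}.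
         q ^ ((card C - 1) * (card (?V - C) - 1)) * (R q C * R q (?V - C)))"
  have SX: "S = q ^ (N - 2) * X"
    unfolding S_def X_def using S_form[OF fV uV vV uv] N5 cV by simp
  have T3: "\<bar>\<Sum>C\<in>{C. 0 \<in> C \<and> C \<subseteq> ?V \<and> 1 \<notin> C} - {{0}} - {?V - {1}}.
         q ^ ((card C - 1) * (card (?V - C) - 1)) * (R q C * R q (?V - C))\<bar> \<le> 1 / 2"
    using T3_bound[OF fV uV vV uv s0 s1 q M0 RM] n3 c3 cV by simp
  have dev1: "\<bar>R q W - 1\<bar> \<le> 1 / 4" if W: "W = ?V - {w}" "w \<in> ?V" "x \<in> W" for W w x
  proof -
    have fW: "finite W" using W by simp
    have cW: "card W = N - 1" using W by simp
    have "\<bar>R q W - 1\<bar> \<le> M * (real (card W) ^ 2 * s ^ card W)"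
    proof (rule Rdev[OF fW W(3) s0 s1 q _ M0])
      show "real (card W) * s ^ card W \<le> 1" using n2 cW by simp
      fix C assume "C \<subset> W"
      then have "finite C" using fW by (meson finite_subset psubset_imp_subset)
      then show "\<bar>R q C\<bar> \<le> M" by (rule RM)
    qed
    then show ?thesis using c2 cW by simp
  qed
  have R0: "\<bar>R q (?V - {0}) - 1\<bar> \<le> 1 / 4" by (rule dev1[of _ 0 1]) (use N5 in auto)
  have R1: "\<bar>R q (?V - {1}) - 1\<bar> \<le> 1 / 4" by (rule dev1[of _ 1 0]) (use N5 in auto)
  have RVb: "\<bar>R q ?V - 1\<bar> \<le> 1 / 2"
  proof -
    have "\<bar>R q ?V - 1\<bar> \<le> M * (real (card ?V) ^ 2 * s ^ card ?V)"
    proof (rule Rdev[OF fV uV s0 s1 q _ M0])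
      show "real (card ?V) * s ^ card ?V \<le> 1" using n1 cV by simp
      fix C assume "C \<subset> ?V"
      then have "finite C" using fV by (meson finite_subset psubset_imp_subset)
      then show "\<bar>R q C\<bar> \<le> M" by (rule RM)
    qed
    then show ?thesis using c1 cV by simp
  qed
  have X1: "1 \<le> X" using R0 R1 T3 unfolding X_def by linarith
  have X2: "X \<le> 2 * M + 1"
    using abs_le_D1[OF RM[of "?V - {0}"]] abs_le_D1[OF RM[of "?V - {1}"]] abs_le_D1[OF T3]
    unfolding X_def by simp
  have qn: "q ^ (N - 2) < 0" using q0 oddN N5 by simp
  have qa: "\<bar>q ^ (N - 2)\<bar> \<le> (s ^ 2) ^ (N - 2)"
    unfolding power_abs by (rule power_mono[OF q]) simp
  have Sneg: "S < 0" unfolding SX using qn X1 by (simp add: mult_neg_pos)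
  have Sabs: "- S \<le> 1 / 4"
  proof -
    have aq: "\<bar>q ^ (N - 2)\<bar> = - (q ^ (N - 2))" using qn by (rule abs_of_neg)
    have "- S = \<bar>q ^ (N - 2)\<bar> * X" unfolding SX aq by simp
    also have "\<dots> \<le> (s ^ 2) ^ (N - 2) * (2 * M + 1)"
      by (rule mult_mono[OF qa X2]) (use X1 in simp_all)
    finally show ?thesis using c4 by (simp add: mult.commute)
  qed
  have RVp: "1 / 2 \<le> R q ?V" using RVb by linarith
  have key: "(-1 - q) * S \<le> 1 / 4"
  proof -
    have "(-1 - q) * S = (1 + q) * (- S)" by (simp add: algebra_simps)
    also have "\<dots> \<le> 1 * (1 / 4)"
      by (rule mult_mono) (use q1 q0 Sabs Sneg in simp_all)
    finally show ?thesis by simp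
  qed
  have "RH / S < -2"
  proof -
    have "-2 * S < RH" using RV key RVp by (simp add: algebra_simps)
    then show ?thesis using Sneg by (simp add: neg_divide_less_eq)
  qed
  then show ?thesis unfolding SH YH using Sneg by simp
qed

lemma small_aux:
  fixes M g :: real
  assumes M1: "1 \<le> M" and g0: "0 \<le> g" and g: "g < 1 / (4 * M * M)"
  shows "M * g \<le> 1 / 4" "M ^ 2 * g \<le> 1 / 2"
proof -
  have Mp: "0 < 4 * M * M" using M1 by simp
  have "g * (4 * M * M) < 1" using g Mp by (simp add: pos_less_divide_eq)
  then have a: "M * M * g < 1 / 4" by (simp add: algebra_simps)
  have "M * g \<le> M * M * g"
  proof -
    have "1 * (M * g) \<le> M * (M * g)" by (rule mult_right_mono) (use M1 g0 in simp_all)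
    then show ?thesis by (simp add: mult.assoc)
  qed
  then show "M * g \<le> 1 / 4" using a by linarith
  show "M ^ 2 * g \<le> 1 / 2" using a by (simp add: power2_eq_square)
qed

theorem proposition3p1:
  fixes K :: "real set"
  assumes "compact K" and "K \<subseteq> {-1<..<0}"
  shows "\<exists>N::nat. N \<ge> 3 \<and> (\<forall>q\<in>K. S_H N q \<noteq> 0 \<and> yhat_H N q < -1)"
proof (cases "K = {}")
  case True
  then show ?thesis by (intro exI[of _ 3]) simp
next
  case False
  obtain a where aK: "a \<in> K" and amin: "\<And>t. t \<in> K \<Longrightarrow> a \<le> t"
    using compact_attains_inf[OF assms(1) False] by blast
  have a1: "-1 < a" and a0: "a < 0" using aK assms(2) by auto
  define s where "s = sqrt (- a)"
  have s0: "0 < s" unfolding s_def using a0 by simp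
  have s2: "s ^ 2 = - a" unfolding s_def using a0 by simp
  have s1: "s < 1" unfolding s_def using a1 by (simp add: real_sqrt_less_iff[of "-a" 1, simplified])
  have qK: "\<bar>q\<bar> \<le> s ^ 2 \<and> q < 0 \<and> -1 < q" if "q \<in> K" for q
  proof -
    have "q < 0" "-1 < q" using that assms(2) by auto
    moreover have "a \<le> q" by (rule amin[OF that])
    ultimately show ?thesis using s2 by simp
  qed
  define t where "t = sqrt s"
  have t0: "0 \<le> t" unfolding t_def using s0 by simp
  have t1: "t < 1" unfolding t_def using s1 s0 by simp
  have t2: "t ^ 2 = s" unfolding t_def using s0 by simp
  define G where "G = (\<lambda>n::nat. real n ^ 2 * s ^ n)"
  have G0: "0 \<le> G n" for n unfolding G_def using s0 by simp
  have Glim: "G \<longlonglongrightarrow> 0"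
  proof -
    have nt: "norm t < 1" using t0 t1 by simp
    have L: "(\<lambda>n. of_nat n * t ^ n) \<longlonglongrightarrow> (0::real)"
      by (rule powser_times_n_limit_0[OF nt])
    have "(\<lambda>n. (of_nat n * t ^ n) * (of_nat n * t ^ n)) \<longlonglongrightarrow> (0::real) * 0"
      by (rule tendsto_mult[OF L L])
    moreover have "(\<lambda>n. (of_nat n * t ^ n) * (of_nat n * t ^ n)) = G"
    proof
      fix n
      have "t ^ n * t ^ n = (t ^ 2) ^ n" by (simp add: power_mult_distrib[symmetric] power2_eq_square)
      then show "(of_nat n * t ^ n) * (of_nat n * t ^ n) = G n"
        unfolding G_def t2 by (simp add: power2_eq_square algebra_simps)
    qed
    ultimately show ?thesis by simp
  qed
  obtain n0' where n0': "\<And>n. n \<ge> n0' \<Longrightarrow> norm (G n - 0) < 1 / 2"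
    using LIMSEQ_D[OF Glim, of "1/2"] by auto
  define n0 where "n0 = max n0' 1"
  have n01: "1 \<le> n0" unfolding n0_def by simp
  have Gn0: "G n \<le> 1 / 2" if "n0 \<le> n" for n
    using n0'[of n] that unfolding n0_def by simp
  define M :: real where "M = max 2 (4 ^ (n0 ^ 2))"
  have M2: "2 \<le> M" unfolding M_def by simp
  have RM: "\<bar>R q C\<bar> \<le> M" if "q \<in> K" "finite C" for q C
    unfolding M_def
  proof (rule R_uniform[of s n0 q C])
    show "0 \<le> s" using s0 by simp
    show "s \<le> 1" using s1 by simp
    show "1 \<le> n0" by (rule n01)
    show "real n ^ 2 * s ^ n \<le> 1 / 2" if "n0 \<le> n" for n using Gn0[OF that] unfolding G_def .
    show "\<bar>q\<bar> \<le> s ^ 2" using qK[OF \<open>q \<in> K\<close>] by blast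
    show "finite C" by fact
  qed
  have Mp: "0 < 4 * M * M" using M2 by simp
  obtain m1 where m1: "\<And>n. n \<ge> m1 \<Longrightarrow> norm (G n - 0) < 1 / (4 * M * M)"
    using LIMSEQ_D[OF Glim, of "1 / (4 * M * M)"] Mp by auto
  have s2lim: "(\<lambda>n. (s ^ 2) ^ n) \<longlonglongrightarrow> (0::real)"
    by (rule LIMSEQ_power_zero) (use s0 s1 in \<open>simp add: power_less_one_iff\<close>)
  have Mp2: "0 < 1 / (4 * (2 * M + 1))" using M2 by simp
  obtain m2 where m2: "\<And>n. n \<ge> m2 \<Longrightarrow> norm ((s ^ 2) ^ n - 0) < 1 / (4 * (2 * M + 1))"
    using LIMSEQ_D[OF s2lim Mp2] by auto
  define N where "N = 2 * (n0 + m1 + m2) + 5"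
  have oddN: "odd N" unfolding N_def by simp
  have N5: "5 \<le> N" unfolding N_def by simp
  have ge: "n0 \<le> N - 2" "m1 \<le> N - 2" "m2 \<le> N - 2" unfolding N_def by auto
  have Gs: "M * G n \<le> 1 / 4" "M ^ 2 * G n \<le> 1 / 2" if "N - 2 \<le> n" for n
  proof -
    have "G n < 1 / (4 * M * M)" using m1[of n] ge that G0[of n] by simp
    then show "M * G n \<le> 1 / 4" "M ^ 2 * G n \<le> 1 / 2" using small_aux[of M "G n"] M2 G0[of n] by simp_all
  qed
  have ns: "real n * s ^ n \<le> 1" if "N - 2 \<le> n" for n
  proof -
    have "n0 \<le> n" using ge that by simp
    then have "G n \<le> 1 / 2" by (rule Gn0)
    moreover have "real n * s ^ n \<le> real n ^ 2 * s ^ n" by (rule ns_le) (use s0 n01 \<open>n0 \<le> n\<close> in simp_all)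
    ultimately show ?thesis unfolding G_def by simp
  qed
  have c4: "(2 * M + 1) * (s ^ 2) ^ (N - 2) \<le> 1 / 4"
  proof -
    have "(s ^ 2) ^ (N - 2) < 1 / (4 * (2 * M + 1))" using m2[of "N - 2"] ge s0 by simp
    moreover have "0 < 2 * M + 1" using M2 by simp
    ultimately have "(s ^ 2) ^ (N - 2) * (4 * (2 * M + 1)) < 1" by (simp add: pos_less_divide_eq)
    then show ?thesis by (simp add: algebra_simps)
  qed
  show ?thesis
  proof (rule exI[of _ N], rule conjI)
    show "3 \<le> N" using N5 by simp
    show "\<forall>q\<in>K. S_H N q \<noteq> 0 \<and> yhat_H N q < -1"
    proof
    fix q assume q: "q \<in> K"
    show "S_H N q \<noteq> 0 \<and> yhat_H N q < -1"
    proof (rule main_q[OF oddN N5, of q s M])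
      show "q < 0" "-1 < q" "\<bar>q\<bar> \<le> s ^ 2" using qK[OF q] by blast+
      show "0 \<le> s" "s \<le> 1" using s0 s1 by simp_all
      show "2 \<le> M" by (rule M2)
      show "\<bar>R q C\<bar> \<le> M" if "finite C" for C by (rule RM[OF q that])
      show "M * (real N ^ 2 * s ^ N) \<le> 1 / 2" using Gs(1)[of N] unfolding G_def by simp
      show "M * (real (N - 1) ^ 2 * s ^ (N - 1)) \<le> 1 / 4" using Gs(1)[of "N - 1"] unfolding G_def by simp
      show "M ^ 2 * (real (N - 2) ^ 2 * s ^ (N - 2)) \<le> 1 / 2" using Gs(2)[of "N - 2"] unfolding G_def by simp
      show "(2 * M + 1) * (s ^ 2) ^ (N - 2) \<le> 1 / 4" by (rule c4)
      show "real N * s ^ N \<le> 1" by (rule ns) simp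
      show "real (N - 1) * s ^ (N - 1) \<le> 1" by (rule ns) simp
      show "real (N - 2) * s ^ (N - 2) \<le> 1" by (rule ns) simp
    qed
    qed
  qed
qed

end
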